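(* Let $C\ge 0$. If there is a $C$-competitive mixed online algorithm for an online problem $(\mathcal X,\mathcal R,d)$, then there is a $C$-competitive online algorithm for this problem in each of the three standard models of randomized online algorithms: distributions over deterministic online algorithms, behavioral online algorithms, and distributional online algorithms.
   Context: Online problem: a set $\mathcal X$ of states (configurations), a set $\mathcal R$ of requests, a start state $s^0\in\mathcal X$, a function $d:\mathcal X\times\mathcal X\to[0,\infty)$ with $d(x,x)=0$ and $d(x,z)\le d(x,y)+d(y,z)$, and a cost function $\mathrm{cost}:\mathcal X\times\mathcal R\times\mathcal X\to[0,\infty)$ satisfying $\mathrm{cost}(u,r,v)\le d(u,x)+\mathrm{cost}(x,r,y)+d(y,v)$. For a request sequence $\varrho=r^1\dots r^n$, $\mathrm{cost}_{\mathrm{opt}}(\varrho)$ is the infimum of $\sum_{t=1}^n\mathrm{cost}(x^{t-1},r^t,x^t)$ over all $x^1,\dots,x^n\in\mathcal X$ with $x^0=s^0$. A (randomized) online algorithm $\mathcal A$ is $C$-competitive if there is a constant $K$ such that $E(\mathrm{cost}_{\mathcal A}(\varrho))\le C\cdot\mathrm{cost}_{\mathrm{opt}}(\varrho)+K$ for every finite request sequence $\varrho$. $\Pi$ is the set of finitely supported probability distributions on $\mathcal X$; for $\pi,\pi'\in\Pi$, $\mathrm{cost}(\pi,r,\pi')$ is the minimum of $\sum_{x,y}\gamma(x,y)\mathrm{cost}(x,r,y)$ over probability distributions $\gamma$ on $\mathrm{supp}(\pi)\times\mathrm{supp}(\pi')$ with marginals $\pi,\pi'$. Mixed online algorithm: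 memory states $\mathcal M$, start memory $m^0$; for each full state $k=(\pi,m)\in\Pi\times\mathcal M$ and request $r$, finitely many subsequent full states $k_i=(\pi_i,m_i)$ with weights $\lambda_i>0$ summing to $1$; from $k^0=(s^0,m^0)$, on request $r^t$ it moves to $k^t=k_i$ with probability $\lambda_i$; step cost $\mathrm{cost}(\pi,r,\sum_i\lambda_i\pi_i)$, total cost the sum of step costs. Deterministic online algorithm: chooses $x^t$ as a function of $r^1,\dots,r^t$, cost $\sum_t \mathrm{cost}(x^{t-1},r^t,x^t)$; a distribution over them is a random variable with such values. Behavioral algorithm: from full state $(x^{t-1},m^{t-1})\in\mathcal X\times\mathcal M$ and $r^t$ draws $(x^t,m^t)$ from a finitely supported distribution depending only on $(x^{t-1},m^{t-1},r^t)$, cost $\sum_t\mathrm{cost}(x^{t-1},r^t,x^t)$. Distributional algorithm: deterministic map $(\pi^{t-1},m^{t-1},r^t)\mapsto(\pi^t,m^t)$ on $\Pi\times\mathcal M\times\mathcal R$, cost $\sum_t\mathrm{cost}(\pi^{t-1},r^t,\pi^t)$. *)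

theory Defs
  imports "HOL-Probability.Probability"
begin

text \<open>States have type 'x, requests type 'r. d is the distance function, cost the
  cost function (cost u r v = cost of serving r while moving from u to v).\<close>

definition online_problem :: "('x \<Rightarrow> 'x \<Rightarrow> real) \<Rightarrow> ('x \<Rightarrow> 'r \<Rightarrow> 'x \<Rightarrow> real) \<Rightarrow> bool" where
  "online_problem d cost \<longleftrightarrow>
     (\<forall>x y. 0 \<le> d x y) \<and> (\<forall>x. d x x = 0) \<and> (\<forall>x y z. d x z \<le> d x y + d y z) \<and>
     (\<forall>u r v. 0 \<le> cost u r v) \<and>
     (\<forall>u r v x y. cost u r v \<le> d u x + cost x r y + d y v)"

fun path_cost :: "('x \<Rightarrow> 'r \<Rightarrow> 'x \<Rightarrow> real) \<Rightarrow> 'x \<Rightarrow> 'r list \<Rightarrow> 'x list \<Rightarrow> real" where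
  "path_cost cost x (r # rs) (y # ys) = cost x r y + path_cost cost y rs ys"
| "path_cost cost x _ _ = 0"

definition opt_cost :: "('x \<Rightarrow> 'r \<Rightarrow> 'x \<Rightarrow> real) \<Rightarrow> 'x \<Rightarrow> 'r list \<Rightarrow> real" where
  "opt_cost cost s0 rs = Inf {path_cost cost s0 rs xs | xs. length xs = length rs}"

definition competitive :: "real \<Rightarrow> ('x \<Rightarrow> 'r \<Rightarrow> 'x \<Rightarrow> real) \<Rightarrow> 'x \<Rightarrow> ('r list \<Rightarrow> real) \<Rightarrow> bool" where
  "competitive C cost s0 algcost \<longleftrightarrow> (\<exists>K. \<forall>rs. algcost rs \<le> C * opt_cost cost s0 rs + K)"

definition fin_dist :: "'a pmf \<Rightarrow> bool" where
  "fin_dist p \<longleftrightarrow> finite (set_pmf p)"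

text \<open>cost(pi, r, pi'): optimal coupling cost. Every coupling of pi and pi' is supported
  on supp pi \<times> supp pi'.\<close>
definition pmf_cost :: "('x \<Rightarrow> 'r \<Rightarrow> 'x \<Rightarrow> real) \<Rightarrow> 'x pmf \<Rightarrow> 'r \<Rightarrow> 'x pmf \<Rightarrow> real" where
  "pmf_cost cost \<pi> r \<pi>' = Inf {(\<Sum>xy\<in>set_pmf \<gamma>. pmf \<gamma> xy * cost (fst xy) r (snd xy)) | \<gamma>.
       map_pmf fst \<gamma> = \<pi> \<and> map_pmf snd \<gamma> = \<pi>'}"

text \<open>A mixed algorithm with memory type 'm: for each full state k = (pi, m) with pi finitely
  supported and each request r, a finitely supported distribution (weights lambda_i > 0
  summing to 1) over subsequent full states (pi_i, m_i) with pi_i finitely supported.\<close>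
definition mixed_alg :: "(('x pmf \<times> 'm) \<Rightarrow> 'r \<Rightarrow> ('x pmf \<times> 'm) pmf) \<Rightarrow> bool" where
  "mixed_alg step \<longleftrightarrow> (\<forall>\<pi> m r. fin_dist \<pi> \<longrightarrow>
      finite (set_pmf (step (\<pi>, m) r)) \<and> (\<forall>k\<in>set_pmf (step (\<pi>, m) r). fin_dist (fst k)))"

fun mixed_traj :: "(('x pmf \<times> 'm) \<Rightarrow> 'r \<Rightarrow> ('x pmf \<times> 'm) pmf) \<Rightarrow> ('x pmf \<times> 'm) \<Rightarrow> 'r list
                    \<Rightarrow> ('x pmf \<times> 'm) list pmf" where
  "mixed_traj step k [] = return_pmf []"
| "mixed_traj step k (r # rs) =
     bind_pmf (step k r) (\<lambda>k'. map_pmf (\<lambda>ks. k' # ks) (mixed_traj step k' rs))"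

text \<open>Total cost along a realised sequence of full states: the step cost from k on request r
  is cost(pi, r, sum_i lambda_i pi_i), where the mixture is bind_pmf (step k r) fst.\<close>
fun mixed_path_cost :: "('x \<Rightarrow> 'r \<Rightarrow> 'x \<Rightarrow> real) \<Rightarrow> (('x pmf \<times> 'm) \<Rightarrow> 'r \<Rightarrow> ('x pmf \<times> 'm) pmf)
                         \<Rightarrow> ('x pmf \<times> 'm) \<Rightarrow> 'r list \<Rightarrow> ('x pmf \<times> 'm) list \<Rightarrow> real" where
  "mixed_path_cost cost step k (r # rs) (k' # ks) =
     pmf_cost cost (fst k) r (bind_pmf (step k r) fst) + mixed_path_cost cost step k' rs ks"
| "mixed_path_cost cost step k _ _ = 0"

definition mixed_exp_cost :: "('x \<Rightarrow> 'r \<Rightarrow> 'x \<Rightarrow> real) \<Rightarrow> 'x \<Rightarrow> 'm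
      \<Rightarrow> (('x pmf \<times> 'm) \<Rightarrow> 'r \<Rightarrow> ('x pmf \<times> 'm) pmf) \<Rightarrow> 'r list \<Rightarrow> real" where
  "mixed_exp_cost cost s0 m0 step rs =
     measure_pmf.expectation (mixed_traj step (return_pmf s0, m0) rs)
       (mixed_path_cost cost step (return_pmf s0, m0) rs)"

text \<open>A deterministic algorithm A chooses x^t = A [r^1,...,r^t].\<close>
definition det_cost :: "('x \<Rightarrow> 'r \<Rightarrow> 'x \<Rightarrow> real) \<Rightarrow> 'x \<Rightarrow> ('r list \<Rightarrow> 'x) \<Rightarrow> 'r list \<Rightarrow> real" where
  "det_cost cost s0 A rs = path_cost cost s0 rs (map (\<lambda>t. A (take t rs)) [1..<Suc (length rs)])"

definition random_det_alg :: "('x \<Rightarrow> 'r \<Rightarrow> 'x \<Rightarrow> real) \<Rightarrow> 'x \<Rightarrow> ('r list \<Rightarrow> 'x) measure \<Rightarrow> bool" where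
  "random_det_alg cost s0 M \<longleftrightarrow> prob_space M \<and> (\<forall>rs. integrable M (\<lambda>A. det_cost cost s0 A rs))"

definition random_det_exp_cost :: "('x \<Rightarrow> 'r \<Rightarrow> 'x \<Rightarrow> real) \<Rightarrow> 'x \<Rightarrow> ('r list \<Rightarrow> 'x) measure
      \<Rightarrow> 'r list \<Rightarrow> real" where
  "random_det_exp_cost cost s0 M rs = (\<integral>A. det_cost cost s0 A rs \<partial>M)"

definition behavioral_alg :: "('x \<Rightarrow> 'b \<Rightarrow> 'r \<Rightarrow> ('x \<times> 'b) pmf) \<Rightarrow> bool" where
  "behavioral_alg \<beta> \<longleftrightarrow> (\<forall>x m r. finite (set_pmf (\<beta> x m r)))"

fun behav_traj :: "('x \<Rightarrow> 'b \<Rightarrow> 'r \<Rightarrow> ('x \<times> 'b) pmf) \<Rightarrow> ('x \<times> 'b) \<Rightarrow> 'r list \<Rightarrow> ('x \<times> 'b) list pmf" where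
  "behav_traj \<beta> xm [] = return_pmf []"
| "behav_traj \<beta> xm (r # rs) =
     bind_pmf (\<beta> (fst xm) (snd xm) r) (\<lambda>xm'. map_pmf (\<lambda>ks. xm' # ks) (behav_traj \<beta> xm' rs))"

definition behav_exp_cost :: "('x \<Rightarrow> 'r \<Rightarrow> 'x \<Rightarrow> real) \<Rightarrow> 'x \<Rightarrow> 'b
      \<Rightarrow> ('x \<Rightarrow> 'b \<Rightarrow> 'r \<Rightarrow> ('x \<times> 'b) pmf) \<Rightarrow> 'r list \<Rightarrow> real" where
  "behav_exp_cost cost s0 m0 \<beta> rs =
     measure_pmf.expectation (behav_traj \<beta> (s0, m0) rs) (\<lambda>ks. path_cost cost s0 rs (map fst ks))"

definition distributional_alg :: "('x pmf \<Rightarrow> 'b \<Rightarrow> 'r \<Rightarrow> ('x pmf \<times> 'b)) \<Rightarrow> bool" where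
  "distributional_alg \<delta> \<longleftrightarrow> (\<forall>\<pi> m r. fin_dist \<pi> \<longrightarrow> fin_dist (fst (\<delta> \<pi> m r)))"

fun distr_cost_from :: "('x \<Rightarrow> 'r \<Rightarrow> 'x \<Rightarrow> real) \<Rightarrow> ('x pmf \<Rightarrow> 'b \<Rightarrow> 'r \<Rightarrow> ('x pmf \<times> 'b))
                          \<Rightarrow> ('x pmf \<times> 'b) \<Rightarrow> 'r list \<Rightarrow> real" where
  "distr_cost_from cost \<delta> k [] = 0"
| "distr_cost_from cost \<delta> k (r # rs) =
     pmf_cost cost (fst k) r (fst (\<delta> (fst k) (snd k) r)) + distr_cost_from cost \<delta> (\<delta> (fst k) (snd k) r) rs"

definition distr_cost :: "('x \<Rightarrow> 'r \<Rightarrow> 'x \<Rightarrow> real) \<Rightarrow> 'x \<Rightarrow> 'b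
      \<Rightarrow> ('x pmf \<Rightarrow> 'b \<Rightarrow> 'r \<Rightarrow> ('x pmf \<times> 'b)) \<Rightarrow> 'r list \<Rightarrow> real" where
  "distr_cost cost s0 m0 \<delta> rs = distr_cost_from cost \<delta> (return_pmf s0, m0) rs"

end

theory Submission
  imports Defs
begin

abbreviation E :: "'a pmf \<Rightarrow> ('a \<Rightarrow> real) \<Rightarrow> real" where
  "E p f \<equiv> measure_pmf.expectation p f"

lemma E_sum:
  assumes "finite A" "set_pmf p \<subseteq> A"
  shows "E p f = (\<Sum>a\<in>A. f a * pmf p a)"
  using assms by (intro integral_measure_pmf_real) auto

lemma E_bind:
  assumes fp: "finite (set_pmf p)" and fq: "\<And>x. x \<in> set_pmf p \<Longrightarrow> finite (set_pmf (q x))"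
  shows "E (bind_pmf p q) f = E p (\<lambda>x. E (q x) f)"
proof -
  define A where "A = set_pmf (bind_pmf p q)"
  have fA: "finite A" unfolding A_def using fp fq by auto
  have sub: "\<And>x. x \<in> set_pmf p \<Longrightarrow> set_pmf (q x) \<subseteq> A" unfolding A_def by auto
  have "E (bind_pmf p q) f = (\<Sum>y\<in>A. f y * pmf (bind_pmf p q) y)"
    using fA by (intro E_sum) (auto simp: A_def)
  also have "\<dots> = (\<Sum>y\<in>A. f y * (\<Sum>x\<in>set_pmf p. pmf (q x) y * pmf p x))"
    by (intro sum.cong refl) (simp add: pmf_bind E_sum[OF fp])
  also have "\<dots> = (\<Sum>x\<in>set_pmf p. (\<Sum>y\<in>A. f y * pmf (q x) y) * pmf p x)"
    by (simp add: sum_distrib_left sum_distrib_right sum.swap[of _ A] mult.assoc mult.commute mult.left_commute)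
  also have "\<dots> = E p (\<lambda>x. E (q x) f)"
    using fp by (subst E_sum[of "set_pmf p"]) (auto intro!: sum.cong simp: E_sum[OF fA sub])
  finally show ?thesis .
qed

lemma E_cong:
  "(\<And>x. x \<in> set_pmf p \<Longrightarrow> f x = g x) \<Longrightarrow> E p f = E p g"
  by (intro integral_cong_AE) (auto simp: AE_measure_pmf_iff)

lemma E_add:
  assumes "finite (set_pmf p)"
  shows "E p (\<lambda>x. f x + g x) = E p f + E p g"
  using assms by (intro Bochner_Integration.integral_add integrable_measure_pmf_finite)

lemma E_mono:
  assumes "finite (set_pmf p)" "\<And>x. x \<in> set_pmf p \<Longrightarrow> f x \<le> g x"
  shows "E p f \<le> E p g"
  using assms by (intro integral_mono_AE integrable_measure_pmf_finite) (auto simp: AE_measure_pmf_iff)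

lemma E_nonneg:
  assumes "\<And>x. x \<in> set_pmf p \<Longrightarrow> 0 \<le> f x"
  shows "0 \<le> E p f"
  using assms by (intro integral_nonneg_AE) (auto simp: AE_measure_pmf_iff)

lemma E_const: "E p (\<lambda>x. c) = c"
  by simp

definition ccost :: "('x \<Rightarrow> 'r \<Rightarrow> 'x \<Rightarrow> real) \<Rightarrow> 'r \<Rightarrow> ('x \<times> 'x) pmf \<Rightarrow> real" where
  "ccost cost r \<gamma> = (\<Sum>xy\<in>set_pmf \<gamma>. pmf \<gamma> xy * cost (fst xy) r (snd xy))"

lemma ccost_E:
  "finite (set_pmf \<gamma>) \<Longrightarrow> ccost cost r \<gamma> = E \<gamma> (\<lambda>z. cost (fst z) r (snd z))"
  unfolding ccost_def by (subst E_sum[of "set_pmf \<gamma>"]) (auto simp: mult.commute)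

lemma coupling_support:
  assumes "map_pmf fst \<gamma> = \<pi>" "map_pmf snd \<gamma> = \<pi>'"
  shows "set_pmf \<gamma> \<subseteq> set_pmf \<pi> \<times> set_pmf \<pi>'"
proof
  fix z assume "z \<in> set_pmf \<gamma>"
  then have "fst z \<in> set_pmf \<pi>" "snd z \<in> set_pmf \<pi>'"
    using assms by (auto simp flip: assms)
  then show "z \<in> set_pmf \<pi> \<times> set_pmf \<pi>'" by (cases z) auto
qed

lemma pmf_cost_le:
  assumes nn: "\<And>u r v. 0 \<le> cost u r v"
    and "map_pmf fst \<gamma> = \<pi>" "map_pmf snd \<gamma> = \<pi>'"
  shows "pmf_cost cost \<pi> r \<pi>' \<le> ccost cost r \<gamma>"
  unfolding pmf_cost_def ccost_def
proof (rule cInf_lower)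
  show "bdd_below {\<Sum>xy\<in>set_pmf \<gamma>. pmf \<gamma> xy * cost (fst xy) r (snd xy) |\<gamma>.
          map_pmf fst \<gamma> = \<pi> \<and> map_pmf snd \<gamma> = \<pi>'}"
    by (rule bdd_belowI[where m=0]) (auto intro!: sum_nonneg mult_nonneg_nonneg nn)
qed (use assms in auto)

lemma pmf_cost_nonneg:
  assumes nn: "\<And>u r v. 0 \<le> cost u r v"
  shows "0 \<le> pmf_cost cost \<pi> r \<pi>'"
  unfolding pmf_cost_def
proof (rule cInf_greatest)
  show "{\<Sum>xy\<in>set_pmf \<gamma>. pmf \<gamma> xy * cost (fst xy) r (snd xy) |\<gamma>.
          map_pmf fst \<gamma> = \<pi> \<and> map_pmf snd \<gamma> = \<pi>'} \<noteq> {}"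
    using map_fst_pair_pmf map_snd_pair_pmf by blast
qed (auto intro!: sum_nonneg mult_nonneg_nonneg nn)

lemma row_sum:
  assumes sub: "set_pmf \<gamma> \<subseteq> A \<times> B" and fB: "finite B"
  shows "pmf (map_pmf fst \<gamma>) x = (\<Sum>y\<in>B. pmf \<gamma> (x, y))"
proof -
  have "pmf (map_pmf fst \<gamma>) x = measure \<gamma> (fst -` {x})" by (simp add: pmf_map)
  also have "\<dots> = measure \<gamma> (fst -` {x} \<inter> set_pmf \<gamma>)" by (simp add: measure_Int_set_pmf)
  also have "fst -` {x} \<inter> set_pmf \<gamma> = ({x} \<times> B) \<inter> set_pmf \<gamma>" using sub by auto
  also have "measure \<gamma> \<dots> = measure \<gamma> ({x} \<times> B)" by (simp add: measure_Int_set_pmf)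
  also have "\<dots> = (\<Sum>z\<in>{x} \<times> B. pmf \<gamma> z)" using fB by (simp add: measure_measure_pmf_finite)
  also have "\<dots> = (\<Sum>y\<in>B. pmf \<gamma> (x, y))"
  proof -
    have "{x} \<times> B = Pair x ` B" by auto
    then show ?thesis by (simp add: sum.reindex inj_on_def)
  qed
  finally show ?thesis .
qed

lemma col_sum:
  assumes sub: "set_pmf \<gamma> \<subseteq> A \<times> B" and fA: "finite A"
  shows "pmf (map_pmf snd \<gamma>) y = (\<Sum>x\<in>A. pmf \<gamma> (x, y))"
proof -
  have "pmf (map_pmf snd \<gamma>) y = measure \<gamma> (snd -` {y})" by (simp add: pmf_map)
  also have "\<dots> = measure \<gamma> (snd -` {y} \<inter> set_pmf \<gamma>)" by (simp add: measure_Int_set_pmf)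
  also have "snd -` {y} \<inter> set_pmf \<gamma> = (A \<times> {y}) \<inter> set_pmf \<gamma>" using sub by auto
  also have "measure \<gamma> \<dots> = measure \<gamma> (A \<times> {y})" by (simp add: measure_Int_set_pmf)
  also have "\<dots> = (\<Sum>z\<in>A \<times> {y}. pmf \<gamma> z)" using fA by (simp add: measure_measure_pmf_finite)
  also have "\<dots> = (\<Sum>x\<in>A. pmf \<gamma> (x, y))"
  proof -
    have "A \<times> {y} = (\<lambda>x. (x, y)) ` A" by auto
    then show ?thesis by (simp add: sum.reindex inj_on_def)
  qed
  finally show ?thesis .
qed

lemma pmf_cost_attained:
  fixes cost :: "'x \<Rightarrow> 'r \<Rightarrow> 'x \<Rightarrow> real"
  assumes nn: "\<And>u r v. 0 \<le> cost u r v"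
    and f1: "finite (set_pmf \<pi>)" and f2: "finite (set_pmf \<pi>')"
  shows "\<exists>\<gamma>. map_pmf fst \<gamma> = \<pi> \<and> map_pmf snd \<gamma> = \<pi>' \<and> ccost cost r \<gamma> = pmf_cost cost \<pi> r \<pi>'"
proof -
  define Sa where "Sa = set_pmf \<pi>"
  define Sb where "Sb = set_pmf \<pi>'"
  define A where "A = Sa \<times> Sb"
  have fA: "finite A" using f1 f2 by (simp add: A_def Sa_def Sb_def)
  define c where "c z = cost (fst z) r (snd z)" for z
  define T where "T z = (if z \<in> A then {0..1::real} else {0})" for z
  define K0 where "K0 = Pi UNIV T"
  define K1 where "K1 = (\<Inter>x\<in>Sa. {g::('x\<times>'x) \<Rightarrow> real. (\<Sum>y\<in>Sb. g (x, y)) = pmf \<pi> x})"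
  define K2 where "K2 = (\<Inter>y\<in>Sb. {g::('x\<times>'x) \<Rightarrow> real. (\<Sum>x\<in>Sa. g (x, y)) = pmf \<pi>' y})"
  define K where "K = K0 \<inter> K1 \<inter> K2"
  have "compactin (product_topology (\<lambda>_. euclidean) UNIV) (PiE UNIV T)"
    by (subst compactin_PiE) (auto simp: T_def)
  then have cK0: "compact K0"
    by (simp add: K0_def euclidean_product_topology PiE_UNIV_domain)
  have cK1: "closed K1" unfolding K1_def
    by (intro closed_INT ballI closed_Collect_eq continuous_on_sum continuous_on_const) auto
  have cK2: "closed K2" unfolding K2_def
    by (intro closed_INT ballI closed_Collect_eq continuous_on_sum continuous_on_const) auto
  have cK: "compact K" unfolding K_def
    using cK0 cK1 cK2 by (metis Int_assoc closed_Int compact_Int_closed)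
  have inK: "pmf \<gamma> \<in> K" if "map_pmf fst \<gamma> = \<pi>" "map_pmf snd \<gamma> = \<pi>'" for \<gamma>
  proof -
    have sub: "set_pmf \<gamma> \<subseteq> Sa \<times> Sb" using coupling_support[OF that] by (simp add: Sa_def Sb_def)
    have "pmf \<gamma> \<in> K0" unfolding K0_def T_def A_def
      using sub by (auto simp: pmf_le_1 set_pmf_iff)
    moreover have "pmf \<gamma> \<in> K1" unfolding K1_def
      using row_sum[OF sub, of x for x] f2 that(1) by (auto simp: Sb_def)
    moreover have "pmf \<gamma> \<in> K2" unfolding K2_def
      using col_sum[OF sub] f1 that(2) by (auto simp: Sa_def)
    ultimately show ?thesis by (simp add: K_def)
  qed
  have "pmf (pair_pmf \<pi> \<pi>') \<in> K" by (rule inK) (simp_all add: map_fst_pair_pmf map_snd_pair_pmf)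
  then have neK: "K \<noteq> {}" by blast
  define \<Phi> where "\<Phi> g = (\<Sum>z\<in>A. g z * c z)" for g :: "('x\<times>'x) \<Rightarrow> real"
  have "continuous_on K \<Phi>" unfolding \<Phi>_def
    by (intro continuous_on_sum continuous_on_mult continuous_on_const continuous_on_subset[OF continuous_on_product_coordinates]) auto
  then obtain g where gK: "g \<in> K" and gmin: "\<And>h. h \<in> K \<Longrightarrow> \<Phi> g \<le> \<Phi> h"
    using continuous_attains_inf[OF cK neK] by blast
  have gT: "g z \<in> T z" for z using gK by (auto simp: K_def K0_def)
  have g0: "g z = 0" if "z \<notin> A" for z using gT[of z] that by (auto simp: T_def)
  have gnn: "0 \<le> g z" for z using gT[of z] by (auto simp: T_def split: if_splits)
  have sumg: "(\<Sum>z\<in>A. g z) = 1"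
  proof -
    have "(\<Sum>z\<in>A. g z) = (\<Sum>x\<in>Sa. \<Sum>y\<in>Sb. g (x, y))" by (simp add: A_def sum.cartesian_product)
    also have "\<dots> = (\<Sum>x\<in>Sa. pmf \<pi> x)" using gK by (auto simp: K_def K1_def intro!: sum.cong)
    also have "\<dots> = 1" using f1 by (simp add: Sa_def sum_pmf_eq_1)
    finally show ?thesis .
  qed
  have int1: "(\<integral>\<^sup>+z. ennreal (g z) \<partial>count_space UNIV) = 1"
    using fA g0 gnn sumg by (subst nn_integral_count_space'[of A]) (auto simp: sum_ennreal)
  define \<gamma> where "\<gamma> = embed_pmf g"
  have pg: "pmf \<gamma> = g" unfolding \<gamma>_def using gnn int1 by (simp add: fun_eq_iff pmf_embed_pmf)
  have sg: "set_pmf \<gamma> \<subseteq> Sa \<times> Sb"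
  proof
    fix z assume "z \<in> set_pmf \<gamma>"
    then have "g z \<noteq> 0" by (simp add: set_pmf_iff pg)
    then show "z \<in> Sa \<times> Sb" using g0[of z] by (auto simp: A_def)
  qed
  have m1: "map_pmf fst \<gamma> = \<pi>"
  proof (rule pmf_eqI)
    fix x
    show "pmf (map_pmf fst \<gamma>) x = pmf \<pi> x"
    proof (cases "x \<in> Sa")
      case True then show ?thesis
        using row_sum[OF sg, of x] f2 gK by (auto simp: Sb_def pg K_def K1_def)
    next
      case False then show ?thesis
        using row_sum[OF sg, of x] f2 g0 by (auto simp: Sa_def Sb_def pg A_def set_pmf_iff)
    qed
  qed
  have m2: "map_pmf snd \<gamma> = \<pi>'"
  proof (rule pmf_eqI)
    fix y
    show "pmf (map_pmf snd \<gamma>) y = pmf \<pi>' y"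
    proof (cases "y \<in> Sb")
      case True then show ?thesis
        using col_sum[OF sg, of y] f1 gK by (auto simp: Sa_def pg K_def K2_def)
    next
      case False then show ?thesis
        using col_sum[OF sg, of y] f1 g0 by (auto simp: Sa_def Sb_def pg A_def set_pmf_iff)
    qed
  qed
  have cc: "ccost cost r \<gamma>' = \<Phi> (pmf \<gamma>')" if "set_pmf \<gamma>' \<subseteq> A" for \<gamma>'
    unfolding ccost_def \<Phi>_def c_def using that fA
    by (intro sum.mono_neutral_left) (auto simp: set_pmf_iff)
  have "pmf_cost cost \<pi> r \<pi>' \<le> ccost cost r \<gamma>" by (rule pmf_cost_le[OF nn m1 m2])
  moreover have "ccost cost r \<gamma> \<le> pmf_cost cost \<pi> r \<pi>'"
    unfolding pmf_cost_def
  proof (rule cInf_greatest)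
    show "{\<Sum>xy\<in>set_pmf \<gamma>. pmf \<gamma> xy * cost (fst xy) r (snd xy) |\<gamma>.
          map_pmf fst \<gamma> = \<pi> \<and> map_pmf snd \<gamma> = \<pi>'} \<noteq> {}"
      using map_fst_pair_pmf map_snd_pair_pmf by blast
  next
    fix v assume "v \<in> {\<Sum>xy\<in>set_pmf \<gamma>. pmf \<gamma> xy * cost (fst xy) r (snd xy) |\<gamma>.
          map_pmf fst \<gamma> = \<pi> \<and> map_pmf snd \<gamma> = \<pi>'}"
    then obtain \<gamma>' where v: "v = ccost cost r \<gamma>'" and c1: "map_pmf fst \<gamma>' = \<pi>" and c2: "map_pmf snd \<gamma>' = \<pi>'"
      by (auto simp: ccost_def)
    have s': "set_pmf \<gamma>' \<subseteq> A" using coupling_support[OF c1 c2] by (simp add: A_def Sa_def Sb_def)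
    have "ccost cost r \<gamma> = \<Phi> g" using cc[of \<gamma>] sg pg by (simp add: A_def)
    also have "\<dots> \<le> \<Phi> (pmf \<gamma>')" by (rule gmin[OF inK[OF c1 c2]])
    also have "\<dots> = v" using cc[OF s'] v by simp
    finally show "ccost cost r \<gamma> \<le> v" .
  qed
  ultimately show ?thesis using m1 m2 by (intro exI[of _ \<gamma>]) auto
qed

lemma pmf_cost_convex:
  fixes cost :: "'x \<Rightarrow> 'r \<Rightarrow> 'x \<Rightarrow> real"
  assumes nn: "\<And>u r v. 0 \<le> cost u r v"
    and fb: "finite (set_pmf b)"
    and ff: "\<And>k. k \<in> set_pmf b \<Longrightarrow> finite (set_pmf (f k))"
    and fg: "\<And>k. k \<in> set_pmf b \<Longrightarrow> finite (set_pmf (g k))"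
  shows "pmf_cost cost (bind_pmf b f) r (bind_pmf b g) \<le> E b (\<lambda>k. pmf_cost cost (f k) r (g k))"
proof -
  have "\<forall>k\<in>set_pmf b. \<exists>\<gamma>. map_pmf fst \<gamma> = f k \<and> map_pmf snd \<gamma> = g k \<and> ccost cost r \<gamma> = pmf_cost cost (f k) r (g k)"
    by (intro ballI pmf_cost_attained nn ff fg)
  then obtain \<gamma> where \<gamma>: "\<And>k. k \<in> set_pmf b \<Longrightarrow> map_pmf fst (\<gamma> k) = f k \<and> map_pmf snd (\<gamma> k) = g k \<and> ccost cost r (\<gamma> k) = pmf_cost cost (f k) r (g k)"
    by metis
  have fin\<gamma>: "finite (set_pmf (\<gamma> k))" if "k \<in> set_pmf b" for k
    using coupling_support[of "\<gamma> k" "f k" "g k"] \<gamma>[OF that] ff[OF that] fg[OF that]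
    by (meson finite_SigmaI finite_subset)
  define \<Gamma> where "\<Gamma> = bind_pmf b \<gamma>"
  have m1: "map_pmf fst \<Gamma> = bind_pmf b f" unfolding \<Gamma>_def map_bind_pmf
    using \<gamma> by (intro bind_pmf_cong) auto
  have m2: "map_pmf snd \<Gamma> = bind_pmf b g" unfolding \<Gamma>_def map_bind_pmf
    using \<gamma> by (intro bind_pmf_cong) auto
  have "pmf_cost cost (bind_pmf b f) r (bind_pmf b g) \<le> ccost cost r \<Gamma>"
    by (rule pmf_cost_le[OF nn m1 m2])
  also have "\<dots> = E \<Gamma> (\<lambda>z. cost (fst z) r (snd z))"
    using fb fin\<gamma> by (intro ccost_E) (auto simp: \<Gamma>_def)
  also have "\<dots> = E b (\<lambda>k. E (\<gamma> k) (\<lambda>z. cost (fst z) r (snd z)))"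
    unfolding \<Gamma>_def using fb fin\<gamma> by (rule E_bind)
  also have "\<dots> = E b (\<lambda>k. pmf_cost cost (f k) r (g k))"
    using \<gamma> fin\<gamma> by (intro E_cong) (simp add: ccost_E[symmetric])
  finally show ?thesis .
qed

definition ME where
  "ME cost step k rs = E (mixed_traj step k rs) (mixed_path_cost cost step k rs)"

definition cstep where
  "cstep cost step k r = pmf_cost cost (fst k) r (bind_pmf (step k r) fst)"

lemma mixed_alg_D:
  assumes "mixed_alg step" "fin_dist (fst k)"
  shows "finite (set_pmf (step k r))" "\<And>k'. k' \<in> set_pmf (step k r) \<Longrightarrow> fin_dist (fst k')"
  using assms unfolding mixed_alg_def by (cases k; force)+

lemma traj_finite:
  assumes "mixed_alg step" "fin_dist (fst k)"
  shows "finite (set_pmf (mixed_traj step k rs))"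
  using assms(2)
proof (induction rs arbitrary: k)
  case Nil then show ?case by simp
next
  case (Cons r rs)
  show ?case using mixed_alg_D[OF assms(1) Cons.prems] Cons.IH by auto
qed

lemma ME_Nil: "ME cost step k [] = 0"
  by (simp add: ME_def)

lemma ME_Cons:
  assumes "mixed_alg step" "fin_dist (fst k)"
  shows "ME cost step k (r # rs) = cstep cost step k r + E (step k r) (\<lambda>k'. ME cost step k' rs)"
proof -
  note D = mixed_alg_D[OF assms]
  have "ME cost step k (r # rs) = E (step k r) (\<lambda>k'. E (map_pmf ((#) k') (mixed_traj step k' rs)) (mixed_path_cost cost step k (r # rs)))"
    unfolding ME_def mixed_traj.simps using D traj_finite[OF assms(1)]
    by (intro E_bind) auto
  also have "\<dots> = E (step k r) (\<lambda>k'. cstep cost step k r + ME cost step k' rs)"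
  proof (intro E_cong)
    fix k' assume k': "k' \<in> set_pmf (step k r)"
    have "E (map_pmf ((#) k') (mixed_traj step k' rs)) (mixed_path_cost cost step k (r # rs))
        = E (mixed_traj step k' rs) (\<lambda>ks. cstep cost step k r + mixed_path_cost cost step k' rs ks)"
      by (simp add: cstep_def)
    also have "\<dots> = cstep cost step k r + ME cost step k' rs"
      unfolding ME_def using traj_finite[OF assms(1) D(2)[OF k']] by (subst E_add) auto
    finally show "E (map_pmf ((#) k') (mixed_traj step k' rs)) (mixed_path_cost cost step k (r # rs)) = cstep cost step k r + ME cost step k' rs" .
  qed
  also have "\<dots> = cstep cost step k r + E (step k r) (\<lambda>k'. ME cost step k' rs)"
    using D by (subst E_add) auto
  finally show ?thesis .
qed

definition dstep where
  "dstep step \<pi> b r = (if finite (set_pmf b) \<and> (\<forall>k\<in>set_pmf b. fin_dist (fst k))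
      then (bind_pmf (bind_pmf b (\<lambda>k. step k r)) fst, bind_pmf b (\<lambda>k. step k r)) else (\<pi>, b))"

lemma dstep_alg:
  assumes "mixed_alg step"
  shows "distributional_alg (dstep step)"
  unfolding distributional_alg_def
proof (intro allI impI)
  fix \<pi> b r assume "fin_dist (\<pi> :: 'a pmf)"
  show "fin_dist (fst (dstep step \<pi> b r))"
  proof (cases "finite (set_pmf b) \<and> (\<forall>k\<in>set_pmf b. fin_dist (fst k))")
    case True
    then show ?thesis using mixed_alg_D[OF assms]
      by (auto simp: dstep_def fin_dist_def)
  next
    case False
    then show ?thesis unfolding dstep_def using \<open>fin_dist \<pi>\<close> by auto
  qed
qed

lemma distr_bound:
  assumes ma: "mixed_alg step" and nn: "\<And>u r v. 0 \<le> cost u r v"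
    and fb: "finite (set_pmf b)" and gb: "\<And>k. k \<in> set_pmf b \<Longrightarrow> fin_dist (fst k)"
  shows "distr_cost_from cost (dstep step) (bind_pmf b fst, b) rs \<le> E b (\<lambda>k. ME cost step k rs)"
  using fb gb
proof (induction rs arbitrary: b)
  case Nil then show ?case by (simp add: ME_Nil)
next
  case (Cons r rs)
  define b' where "b' = bind_pmf b (\<lambda>k. step k r)"
  have ds: "dstep step (bind_pmf b fst) b r = (bind_pmf b' fst, b')"
    using Cons.prems by (simp add: dstep_def b'_def)
  have D1: "\<And>k. k \<in> set_pmf b \<Longrightarrow> finite (set_pmf (step k r))"
    and D2: "\<And>k k'. k \<in> set_pmf b \<Longrightarrow> k' \<in> set_pmf (step k r) \<Longrightarrow> fin_dist (fst k')"
    using mixed_alg_D[OF ma] Cons.prems by blast+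
  note D = D1 D2
  have fb': "finite (set_pmf b')" using Cons.prems D by (auto simp: b'_def)
  have gb': "fin_dist (fst k')" if "k' \<in> set_pmf b'" for k'
    using that D2 by (metis UN_E b'_def set_bind_pmf)
  have e1: "distr_cost_from cost (dstep step) (bind_pmf b fst, b) (r # rs)
      = pmf_cost cost (bind_pmf b fst) r (bind_pmf b' fst) + distr_cost_from cost (dstep step) (bind_pmf b' fst, b') rs"
    by (simp add: ds)
  have e2: "bind_pmf b' fst = bind_pmf b (\<lambda>k. bind_pmf (step k r) fst)"
    by (simp add: b'_def bind_assoc_pmf)
  have i1: "pmf_cost cost (bind_pmf b fst) r (bind_pmf b' fst) \<le> E b (\<lambda>k. cstep cost step k r)"
    unfolding cstep_def e2 using Cons.prems D
    by (intro pmf_cost_convex[OF nn]) (auto simp: fin_dist_def)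
  have i2: "distr_cost_from cost (dstep step) (bind_pmf b' fst, b') rs \<le> E b' (\<lambda>k. ME cost step k rs)"
    by (rule Cons.IH[OF fb' gb'])
  have e3: "E b' (\<lambda>k. ME cost step k rs) = E b (\<lambda>k. E (step k r) (\<lambda>k'. ME cost step k' rs))"
    unfolding b'_def using Cons.prems D by (intro E_bind) auto
  have e4: "E b (\<lambda>k. cstep cost step k r) + E b (\<lambda>k. E (step k r) (\<lambda>k'. ME cost step k' rs)) = E b (\<lambda>k. cstep cost step k r + E (step k r) (\<lambda>k'. ME cost step k' rs))"
    using Cons.prems by (subst E_add) auto
  have e5: "\<dots> = E b (\<lambda>k. ME cost step k (r # rs))"
    using Cons.prems by (intro E_cong) (simp add: ME_Cons[OF ma])
  show ?case using e1 i1 i2 e3 e4 e5 by linarith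
qed

lemma bind_cond_map_cancel:
  "bind_pmf (map_pmf f q) (\<lambda>x. cond_pmf q {y. f y = x}) = q"
  by (rule bind_cond_pmf_cancel) (auto simp: vimage_def)

definition optc where
  "optc cost step k r = (SOME \<gamma>. map_pmf fst \<gamma> = fst k \<and> map_pmf snd \<gamma> = bind_pmf (step k r) fst
       \<and> ccost cost r \<gamma> = cstep cost step k r)"

definition Jt where
  "Jt step k r = bind_pmf (step k r) (\<lambda>k'. map_pmf (\<lambda>x'. (x', k')) (fst k'))"

definition hb where "hb w = (fst w, return_pmf (snd w))"

definition bstep where
  "bstep cost step x b r = (let k = the_elem (set_pmf b) in
     if fin_dist (fst k) \<and> x \<in> set_pmf (fst k) then
       bind_pmf (cond_pmf (optc cost step k r) {z. fst z = x})
         (\<lambda>z. map_pmf hb (cond_pmf (Jt step k r) {w. fst w = snd z}))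
     else return_pmf (x, b))"

context
  fixes cost :: "'x \<Rightarrow> 'r \<Rightarrow> 'x \<Rightarrow> real" and step :: "('x pmf \<times> 'm) \<Rightarrow> 'r \<Rightarrow> ('x pmf \<times> 'm) pmf"
  assumes nn: "\<And>u r v. 0 \<le> cost u r v" and ma: "mixed_alg step"
begin

lemma optc:
  assumes "fin_dist (fst k)"
  shows "map_pmf fst (optc cost step k r) = fst k" "map_pmf snd (optc cost step k r) = bind_pmf (step k r) fst"
    "ccost cost r (optc cost step k r) = cstep cost step k r" "finite (set_pmf (optc cost step k r))"
proof -
  note D = mixed_alg_D[OF ma assms]
  have f2: "finite (set_pmf (bind_pmf (step k r) fst))" using D by (auto simp: fin_dist_def)
  have "\<exists>\<gamma>. map_pmf fst \<gamma> = fst k \<and> map_pmf snd \<gamma> = bind_pmf (step k r) fst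
       \<and> ccost cost r \<gamma> = cstep cost step k r"
    unfolding cstep_def using assms f2 by (intro pmf_cost_attained nn) (auto simp: fin_dist_def)
  then have *: "map_pmf fst (optc cost step k r) = fst k \<and> map_pmf snd (optc cost step k r) = bind_pmf (step k r) fst
       \<and> ccost cost r (optc cost step k r) = cstep cost step k r"
    unfolding optc_def by (rule someI_ex)
  then show "map_pmf fst (optc cost step k r) = fst k" "map_pmf snd (optc cost step k r) = bind_pmf (step k r) fst"
    "ccost cost r (optc cost step k r) = cstep cost step k r" by auto
  show "finite (set_pmf (optc cost step k r))"
  proof -
    have "set_pmf (optc cost step k r) \<subseteq> set_pmf (fst k) \<times> set_pmf (bind_pmf (step k r) fst)"
      using coupling_support[of "optc cost step k r" "fst k" "bind_pmf (step k r) fst"] * by blast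
    then show ?thesis using assms f2 by (meson fin_dist_def finite_SigmaI finite_subset)
  qed
qed

lemma Jt:
  assumes "fin_dist (fst k)"
  shows "map_pmf fst (Jt step k r) = bind_pmf (step k r) fst" "finite (set_pmf (Jt step k r))"
proof -
  note D = mixed_alg_D[OF ma assms]
  show "map_pmf fst (Jt step k r) = bind_pmf (step k r) fst"
    unfolding Jt_def map_bind_pmf map_pmf_comp by simp
  show "finite (set_pmf (Jt step k r))"
    unfolding Jt_def using D by (auto simp: fin_dist_def)
qed

lemma bstep_good:
  assumes g: "fin_dist (fst k)" and x: "x \<in> set_pmf (fst k)"
  shows "bstep cost step x (return_pmf k) r = bind_pmf (cond_pmf (optc cost step k r) {z. fst z = x})
         (\<lambda>z. map_pmf hb (cond_pmf (Jt step k r) {w. fst w = snd z}))"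
  using assms by (simp add: bstep_def)

lemma cond1:
  assumes g: "fin_dist (fst k)" and x: "x \<in> set_pmf (fst k)"
  shows "set_pmf (optc cost step k r) \<inter> {z. fst z = x} \<noteq> {}"
proof -
  have "x \<in> fst ` set_pmf (optc cost step k r)" using x optc(1)[OF g, of r] by (metis set_map_pmf)
  then show ?thesis by auto
qed

lemma cond2:
  assumes g: "fin_dist (fst k)" and z: "z \<in> set_pmf (optc cost step k r)"
  shows "set_pmf (Jt step k r) \<inter> {w. fst w = snd z} \<noteq> {}"
proof -
  have "snd z \<in> set_pmf (map_pmf snd (optc cost step k r))" using z by simp
  then have "snd z \<in> set_pmf (map_pmf fst (Jt step k r))" by (simp only: optc(2)[OF g] Jt(1)[OF g])
  then show ?thesis by auto
qed

lemma bstep_alg: "behavioral_alg (bstep cost step)"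
  unfolding behavioral_alg_def
proof (intro allI)
  fix x :: 'x and b :: "('x pmf \<times> 'm) pmf" and r :: 'r
  define k where "k = the_elem (set_pmf b)"
  show "finite (set_pmf (bstep cost step x b r))"
  proof (cases "fin_dist (fst k) \<and> x \<in> set_pmf (fst k)")
    case True
    then have g: "fin_dist (fst k)" and x: "x \<in> set_pmf (fst k)" by auto
    have "set_pmf (bstep cost step x b r) = (\<Union>z\<in>set_pmf (optc cost step k r) \<inter> {z. fst z = x}.
            hb ` (set_pmf (Jt step k r) \<inter> {w. fst w = snd z}))"
      using True cond1[OF g x] cond2[OF g] by (simp add: bstep_def k_def[symmetric] Let_def)
    then show ?thesis using optc(4)[OF g] Jt(2)[OF g] by simp
  next
    case False
    then show ?thesis unfolding bstep_def k_def[symmetric] Let_def by auto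
  qed
qed

end

definition BE where
  "BE cost \<beta> s rs = E (behav_traj \<beta> s rs) (\<lambda>ks. path_cost cost (fst s) rs (map fst ks))"

lemma btraj_finite:
  assumes "behavioral_alg \<beta>"
  shows "finite (set_pmf (behav_traj \<beta> s rs))"
proof (induction rs arbitrary: s)
  case Nil then show ?case by simp
next
  case (Cons r rs)
  show ?case using assms Cons.IH by (auto simp: behavioral_alg_def)
qed

lemma BE_Nil: "BE cost \<beta> s [] = 0"
  by (simp add: BE_def)

lemma BE_Cons:
  assumes "behavioral_alg \<beta>"
  shows "BE cost \<beta> s (r # rs) = E (\<beta> (fst s) (snd s) r) (\<lambda>s'. cost (fst s) r (fst s') + BE cost \<beta> s' rs)"
proof -
  have "BE cost \<beta> s (r # rs) = E (\<beta> (fst s) (snd s) r) (\<lambda>s'. E (map_pmf ((#) s') (behav_traj \<beta> s' rs)) (\<lambda>ks. path_cost cost (fst s) (r # rs) (map fst ks)))"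
    unfolding BE_def behav_traj.simps using assms btraj_finite[OF assms]
    by (intro E_bind) (auto simp: behavioral_alg_def)
  also have "\<dots> = E (\<beta> (fst s) (snd s) r) (\<lambda>s'. cost (fst s) r (fst s') + BE cost \<beta> s' rs)"
    unfolding BE_def using btraj_finite[OF assms] by (intro E_cong) (simp add: E_add)
  finally show ?thesis .
qed

lemma BE_nonneg:
  assumes "\<And>u r v. 0 \<le> cost u r v"
  shows "0 \<le> BE cost \<beta> s rs"
proof -
  have "0 \<le> path_cost cost x rs xs" for x xs
  proof (induction rs arbitrary: x xs)
    case (Cons r rs) then show ?case using assms by (cases xs) (auto intro: add_nonneg_nonneg)
  qed simp
  then show ?thesis unfolding BE_def by (intro E_nonneg) auto
qed

context
  fixes cost :: "'x \<Rightarrow> 'r \<Rightarrow> 'x \<Rightarrow> real" and step :: "('x pmf \<times> 'm) \<Rightarrow> 'r \<Rightarrow> ('x pmf \<times> 'm) pmf"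
  assumes nn: "\<And>u r v. 0 \<le> cost u r v" and ma: "mixed_alg step"
begin

lemma behav_bound:
  assumes "fin_dist (fst k)"
  shows "E (fst k) (\<lambda>x. BE cost (bstep cost step) (x, return_pmf k) rs) \<le> ME cost step k rs"
  using assms
proof (induction rs arbitrary: k)
  case Nil then show ?case by (simp add: BE_Nil ME_Nil)
next
  case (Cons r rs)
  note g = Cons.prems
  note D = mixed_alg_D[OF ma g]
  note BA = bstep_alg[OF nn ma]
  define \<gamma> where "\<gamma> = optc cost step k r"
  define J where "J = Jt step k r"
  define cg where "cg x = cond_pmf \<gamma> {z. fst z = x}" for x
  define cJ where "cJ x' = cond_pmf J {w. fst w = x'}" for x'
  define G where "G w = BE cost (bstep cost step) (hb w) rs" for w
  define \<Psi> where "\<Psi> x' = E (cJ x') G" for x'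
  have fg: "finite (set_pmf \<gamma>)" using optc(4)[OF nn ma g] by (simp add: \<gamma>_def)
  have fJ: "finite (set_pmf J)" using Jt(2)[OF nn ma g] by (simp add: J_def)
  have scg: "set_pmf (cg x) = set_pmf \<gamma> \<inter> {z. fst z = x}" if "x \<in> set_pmf (fst k)" for x
    unfolding cg_def \<gamma>_def using cond1[OF nn ma g that] by simp
  have scJ: "set_pmf (cJ (snd z)) = set_pmf J \<inter> {w. fst w = snd z}" if "z \<in> set_pmf \<gamma>" for z
    unfolding cJ_def J_def using cond2[OF nn ma g] that by (simp add: \<gamma>_def)
  have scJ': "set_pmf (cJ x') = set_pmf J \<inter> {w. fst w = x'}" if "x' \<in> set_pmf (map_pmf fst J)" for x'
    unfolding cJ_def using that by (intro set_cond_pmf) auto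
  have step1: "E (fst k) (\<lambda>x. BE cost (bstep cost step) (x, return_pmf k) (r # rs))
      = E (fst k) (\<lambda>x. E (cg x) (\<lambda>z. cost (fst z) r (snd z) + \<Psi> (snd z)))"
  proof (intro E_cong)
    fix x assume x: "x \<in> set_pmf (fst k)"
    have "BE cost (bstep cost step) (x, return_pmf k) (r # rs)
        = E (bstep cost step x (return_pmf k) r) (\<lambda>s'. cost x r (fst s') + BE cost (bstep cost step) s' rs)"
      by (simp add: BE_Cons[OF BA])
    also have "bstep cost step x (return_pmf k) r = bind_pmf (cg x) (\<lambda>z. map_pmf hb (cJ (snd z)))"
      unfolding cg_def cJ_def \<gamma>_def J_def by (rule bstep_good[OF nn ma g x])
    also have "E \<dots> (\<lambda>s'. cost x r (fst s') + BE cost (bstep cost step) s' rs)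
        = E (cg x) (\<lambda>z. E (map_pmf hb (cJ (snd z))) (\<lambda>s'. cost x r (fst s') + BE cost (bstep cost step) s' rs))"
      using scg[OF x] fg fJ scJ by (intro E_bind) auto
    also have "\<dots> = E (cg x) (\<lambda>z. cost (fst z) r (snd z) + \<Psi> (snd z))"
    proof (intro E_cong)
      fix z assume z: "z \<in> set_pmf (cg x)"
      then have zg: "z \<in> set_pmf \<gamma>" and zx: "fst z = x" using scg[OF x] by auto
      have "E (map_pmf hb (cJ (snd z))) (\<lambda>s'. cost x r (fst s') + BE cost (bstep cost step) s' rs)
          = E (cJ (snd z)) (\<lambda>w. cost x r (fst (hb w)) + G w)" by (simp add: G_def)
      also have "\<dots> = E (cJ (snd z)) (\<lambda>w. cost (fst z) r (snd z) + G w)"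
        using scJ[OF zg] zx by (intro E_cong) (auto simp: hb_def)
      also have "\<dots> = cost (fst z) r (snd z) + \<Psi> (snd z)"
        unfolding \<Psi>_def using scJ[OF zg] fJ by (subst E_add) auto
      finally show "E (map_pmf hb (cJ (snd z))) (\<lambda>s'. cost x r (fst s') + BE cost (bstep cost step) s' rs) = cost (fst z) r (snd z) + \<Psi> (snd z)" .
    qed
    finally show "BE cost (bstep cost step) (x, return_pmf k) (r # rs) = E (cg x) (\<lambda>z. cost (fst z) r (snd z) + \<Psi> (snd z))" .
  qed
  have m1: "map_pmf fst \<gamma> = fst k" using optc(1)[OF nn ma g] by (simp add: \<gamma>_def)
  have step2: "E (fst k) (\<lambda>x. E (cg x) (\<lambda>z. cost (fst z) r (snd z) + \<Psi> (snd z)))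
      = E \<gamma> (\<lambda>z. cost (fst z) r (snd z) + \<Psi> (snd z))"
  proof -
    have "E (fst k) (\<lambda>x. E (cg x) (\<lambda>z. cost (fst z) r (snd z) + \<Psi> (snd z)))
        = E (bind_pmf (fst k) cg) (\<lambda>z. cost (fst z) r (snd z) + \<Psi> (snd z))"
      using g fg scg by (intro E_bind[symmetric]) (auto simp: fin_dist_def)
    also have "bind_pmf (fst k) cg = \<gamma>"
      unfolding cg_def m1[symmetric] by (rule bind_cond_map_cancel)
    finally show ?thesis .
  qed
  have step3: "E \<gamma> (\<lambda>z. cost (fst z) r (snd z) + \<Psi> (snd z)) = cstep cost step k r + E (bind_pmf (step k r) fst) \<Psi>"
  proof -
    have "E \<gamma> (\<lambda>z. cost (fst z) r (snd z) + \<Psi> (snd z)) = ccost cost r \<gamma> + E \<gamma> (\<lambda>z. \<Psi> (snd z))"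
      using fg by (simp add: E_add ccost_E)
    also have "ccost cost r \<gamma> = cstep cost step k r" using optc(3)[OF nn ma g] by (simp add: \<gamma>_def)
    also have "E \<gamma> (\<lambda>z. \<Psi> (snd z)) = E (map_pmf snd \<gamma>) \<Psi>" by simp
    also have "map_pmf snd \<gamma> = bind_pmf (step k r) fst" using optc(2)[OF nn ma g] by (simp add: \<gamma>_def)
    finally show ?thesis .
  qed
  have mJ: "map_pmf fst J = bind_pmf (step k r) fst" using Jt(1)[OF nn ma g] by (simp add: J_def)
  have step4: "E (bind_pmf (step k r) fst) \<Psi> = E (step k r) (\<lambda>k'. E (fst k') (\<lambda>x'. BE cost (bstep cost step) (x', return_pmf k') rs))"
  proof -
    have "E (bind_pmf (step k r) fst) \<Psi> = E (map_pmf fst J) (\<lambda>x'. E (cJ x') G)" by (simp add: mJ \<Psi>_def[abs_def])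
    also have "\<dots> = E (bind_pmf (map_pmf fst J) cJ) G"
      using fJ scJ' by (intro E_bind[symmetric]) auto
    also have "bind_pmf (map_pmf fst J) cJ = J" unfolding cJ_def by (rule bind_cond_map_cancel)
    also have "E J G = E (step k r) (\<lambda>k'. E (map_pmf (\<lambda>x'. (x', k')) (fst k')) G)"
      unfolding J_def Jt_def using D by (intro E_bind) (auto simp: fin_dist_def)
    also have "\<dots> = E (step k r) (\<lambda>k'. E (fst k') (\<lambda>x'. BE cost (bstep cost step) (x', return_pmf k') rs))"
      by (simp add: G_def hb_def)
    finally show ?thesis .
  qed
  have step5: "E (step k r) (\<lambda>k'. E (fst k') (\<lambda>x'. BE cost (bstep cost step) (x', return_pmf k') rs))
      \<le> E (step k r) (\<lambda>k'. ME cost step k' rs)"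
    using D Cons.IH by (intro E_mono) auto
  show ?case using step1 step2 step3 step4 step5 ME_Cons[OF ma g, of cost r rs] by linarith
qed

end

definition Mf :: "('x \<Rightarrow> 'b \<Rightarrow> 'r \<Rightarrow> ('x \<times> 'b) pmf) \<Rightarrow> (('x \<times> 'b) \<times> 'r) \<Rightarrow> ('x \<times> 'b) measure" where
  "Mf \<beta> i = measure_pmf (\<beta> (fst (fst i)) (snd (fst i)) (snd i))"

definition Lm where "Lm \<beta> = PiM UNIV (Mf \<beta>)"

definition clip where
  "clip \<beta> s r y = (if y \<in> set_pmf (\<beta> (fst s) (snd s) r) then y else (SOME y. y \<in> set_pmf (\<beta> (fst s) (snd s) r)))"

definition ch where "ch \<beta> x s r = clip \<beta> s r (x (s, r))"

fun Gd where
  "Gd cost \<beta> s [] X = 0"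
| "Gd cost \<beta> s (r # rs) X = cost (fst s) r (fst (ch \<beta> (shd X) s r)) + Gd cost \<beta> (ch \<beta> (shd X) s r) rs (stl X)"

fun run where
  "run \<beta> X s [] = s"
| "run \<beta> X s (r # ls) = run \<beta> (stl X) (ch \<beta> (shd X) s r) ls"

fun trace where
  "trace \<beta> X s [] = []"
| "trace \<beta> X s (r # rs) = ch \<beta> (shd X) s r # trace \<beta> (stl X) (ch \<beta> (shd X) s r) rs"

lemma clip_in: "clip \<beta> s r y \<in> set_pmf (\<beta> (fst s) (snd s) r)"
  unfolding clip_def by (simp add: some_in_eq set_pmf_not_empty)

lemma clip_id: "y \<in> set_pmf (\<beta> (fst s) (snd s) r) \<Longrightarrow> clip \<beta> s r y = y"
  unfolding clip_def by simp

lemma prob_Lm: "prob_space (Lm \<beta>)"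
  unfolding Lm_def Mf_def by (intro prob_space_PiM prob_space_measure_pmf)

lemma trace_run: "map (\<lambda>t. run \<beta> X s (take t rs)) [1..<Suc (length rs)] = trace \<beta> X s rs"
proof (induction rs arbitrary: X s)
  case Nil then show ?case by simp
next
  case (Cons r rs)
  have "[1..<Suc (length (r # rs))] = 1 # map Suc [1..<Suc (length rs)]"
    by (simp add: upt_conv_Cons map_Suc_upt del: upt_Suc)
  then show ?case using Cons.IH by (simp del: upt_Suc add: o_def)
qed

lemma path_trace: "path_cost cost (fst s) rs (map fst (trace \<beta> X s rs)) = Gd cost \<beta> s rs X"
  by (induction rs arbitrary: X s) auto

lemma Gd_nonneg:
  fixes cost :: "'x \<Rightarrow> 'r \<Rightarrow> 'x \<Rightarrow> real"
  assumes "\<And>u r v. 0 \<le> cost u r v"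
  shows "0 \<le> Gd cost \<beta> s rs X"
proof (induction rs arbitrary: X s)
  case (Cons r rs) show ?case by (simp only: Gd.simps) (intro add_nonneg_nonneg assms Cons.IH)
qed simp

context
  fixes cost :: "'x \<Rightarrow> 'r \<Rightarrow> 'x \<Rightarrow> real" and \<beta> :: "'x \<Rightarrow> 'b \<Rightarrow> 'r \<Rightarrow> ('x \<times> 'b) pmf"
  assumes nn: "\<And>u r v. 0 \<le> cost u r v" and ba: "behavioral_alg \<beta>"
begin

lemma meas_ch: "(\<lambda>X. ch \<beta> (shd X) s r) \<in> measurable (stream_space (Lm \<beta>)) (count_space (set_pmf (\<beta> (fst s) (snd s) r)))"
proof -
  have fin: "countable (set_pmf (\<beta> (fst s) (snd s) r))"
    using ba by (auto simp: behavioral_alg_def intro: countable_finite)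
  have m: "(\<lambda>X. shd X (s, r)) \<in> measurable (stream_space (Lm \<beta>)) (Mf \<beta> (s, r))"
    unfolding Lm_def by (rule measurable_compose[OF measurable_shd measurable_component_singleton]) simp
  show ?thesis
    unfolding measurable_count_space_eq_countable[OF fin]
  proof (intro conjI ballI)
    show "(\<lambda>X. ch \<beta> (shd X) s r) \<in> space (stream_space (Lm \<beta>)) \<rightarrow> set_pmf (\<beta> (fst s) (snd s) r)"
      by (auto simp: ch_def clip_in)
    fix a
    have "(\<lambda>X. ch \<beta> (shd X) s r) -` {a} \<inter> space (stream_space (Lm \<beta>))
        = (\<lambda>X. shd X (s, r)) -` {y. clip \<beta> s r y = a} \<inter> space (stream_space (Lm \<beta>))"
      by (auto simp: ch_def)
    also have "\<dots> \<in> sets (stream_space (Lm \<beta>))"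
      by (rule measurable_sets[OF m]) (simp add: Mf_def)
    finally show "(\<lambda>X. ch \<beta> (shd X) s r) -` {a} \<inter> space (stream_space (Lm \<beta>)) \<in> sets (stream_space (Lm \<beta>))" .
  qed
qed

lemma meas_Gd: "(\<lambda>X. Gd cost \<beta> s rs X) \<in> borel_measurable (stream_space (Lm \<beta>))"
proof (induction rs arbitrary: s)
  case Nil then show ?case by simp
next
  case (Cons r rs)
  have "(\<lambda>X. (\<lambda>s' X. cost (fst s) r (fst s') + Gd cost \<beta> s' rs (stl X)) (ch \<beta> (shd X) s r) X)
        \<in> borel_measurable (stream_space (Lm \<beta>))"
  proof (rule measurable_compose_countable'[OF _ meas_ch])
    fix s'
    show "(\<lambda>X. cost (fst s) r (fst s') + Gd cost \<beta> s' rs (stl X)) \<in> borel_measurable (stream_space (Lm \<beta>))"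
      by (intro borel_measurable_add borel_measurable_const measurable_compose[OF measurable_stl Cons.IH])
  next
    show "countable (set_pmf (\<beta> (fst s) (snd s) r))"
      using ba by (auto simp: behavioral_alg_def intro: countable_finite)
  qed
  then show ?case by simp
qed

lemma nn_Gd: "(\<integral>\<^sup>+X. ennreal (Gd cost \<beta> s rs X) \<partial>stream_space (Lm \<beta>)) = ennreal (BE cost \<beta> s rs)"
proof (induction rs arbitrary: s)
  case Nil then show ?case by (simp add: BE_Nil)
next
  case (Cons r rs)
  interpret L: prob_space "Lm \<beta>" by (rule prob_Lm)
  interpret S: prob_space "stream_space (Lm \<beta>)" by (rule L.prob_space_stream_space)
  define H where "H y = cost (fst s) r (fst (clip \<beta> s r y)) + BE cost \<beta> (clip \<beta> s r y) rs" for y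
  have "(\<integral>\<^sup>+X. ennreal (Gd cost \<beta> s (r # rs) X) \<partial>stream_space (Lm \<beta>))
      = (\<integral>\<^sup>+x. (\<integral>\<^sup>+X. ennreal (Gd cost \<beta> s (r # rs) (x ## X)) \<partial>stream_space (Lm \<beta>)) \<partial>Lm \<beta>)"
    by (rule L.nn_integral_stream_space) (intro measurable_compose[OF meas_Gd] measurable_ennreal)
  also have "\<dots> = (\<integral>\<^sup>+x. ennreal (H (x (s, r))) \<partial>Lm \<beta>)"
  proof (intro nn_integral_cong)
    fix x
    define s' where "s' = ch \<beta> x s r"
    have "(\<integral>\<^sup>+X. ennreal (Gd cost \<beta> s (r # rs) (x ## X)) \<partial>stream_space (Lm \<beta>))
        = (\<integral>\<^sup>+X. ennreal (cost (fst s) r (fst s')) + ennreal (Gd cost \<beta> s' rs X) \<partial>stream_space (Lm \<beta>))"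
      by (intro nn_integral_cong) (simp add: s'_def ennreal_plus nn Gd_nonneg)
    also have "\<dots> = ennreal (cost (fst s) r (fst s')) + (\<integral>\<^sup>+X. ennreal (Gd cost \<beta> s' rs X) \<partial>stream_space (Lm \<beta>))"
      by (subst nn_integral_add) (auto intro!: measurable_compose[OF meas_Gd] simp: S.emeasure_space_1)
    also have "\<dots> = ennreal (H (x (s, r)))"
      by (simp add: Cons.IH H_def s'_def ch_def ennreal_plus nn BE_nonneg)
    finally show "(\<integral>\<^sup>+X. ennreal (Gd cost \<beta> s (r # rs) (x ## X)) \<partial>stream_space (Lm \<beta>)) = ennreal (H (x (s, r)))" .
  qed
  also have "\<dots> = (\<integral>\<^sup>+y. ennreal (H y) \<partial>distr (Lm \<beta>) (Mf \<beta> (s, r)) (\<lambda>x. x (s, r)))"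
  proof -
    have mc: "(\<lambda>x. x (s, r)) \<in> measurable (PiM UNIV (Mf \<beta>)) (Mf \<beta> (s, r))"
      by (rule measurable_component_singleton) simp
    show ?thesis unfolding Lm_def by (rule nn_integral_distr[symmetric, OF mc]) (simp add: Mf_def)
  qed
  also have "distr (Lm \<beta>) (Mf \<beta> (s, r)) (\<lambda>x. x (s, r)) = Mf \<beta> (s, r)"
    unfolding Lm_def by (rule distr_PiM_component) (auto simp: Mf_def intro: prob_space_measure_pmf)
  also have "(\<integral>\<^sup>+y. ennreal (H y) \<partial>Mf \<beta> (s, r)) = (\<integral>\<^sup>+y. ennreal (cost (fst s) r (fst y) + BE cost \<beta> y rs) \<partial>measure_pmf (\<beta> (fst s) (snd s) r))"
    unfolding Mf_def fst_conv snd_conv by (intro nn_integral_cong_AE) (auto simp: AE_measure_pmf_iff H_def clip_id)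
  also have "\<dots> = ennreal (E (\<beta> (fst s) (snd s) r) (\<lambda>y. cost (fst s) r (fst y) + BE cost \<beta> y rs))"
    using ba by (intro nn_integral_eq_integral integrable_measure_pmf_finite)
      (auto simp: behavioral_alg_def nn BE_nonneg add_nonneg_nonneg)
  also have "\<dots> = ennreal (BE cost \<beta> s (r # rs))" by (simp add: BE_Cons[OF ba])
  finally show ?case .
qed

lemma det_exists:
  "\<exists>M. random_det_alg cost s0 M \<and> (\<forall>rs. random_det_exp_cost cost s0 M rs = BE cost \<beta> (s0, b0) rs)"
proof -
  interpret L: prob_space "Lm \<beta>" by (rule prob_Lm)
  interpret S: prob_space "stream_space (Lm \<beta>)" by (rule L.prob_space_stream_space)
  define S where "S = stream_space (Lm \<beta>)"
  define F where "F X = (\<lambda>ls. fst (run \<beta> X (s0, b0) ls))" for X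
  define Nset where "Nset = {A. F -` A \<inter> space S \<in> sets S}"
  define \<Sigma> where "\<Sigma> = measure_of (UNIV :: ('r list \<Rightarrow> 'x) set) Nset (\<lambda>_. 0)"
  define M where "M = distr S \<Sigma> F"
  have dc: "det_cost cost s0 (F X) rs = Gd cost \<beta> (s0, b0) rs X" for X rs
  proof -
    have "map (\<lambda>t. F X (take t rs)) [1..<Suc (length rs)] = map fst (map (\<lambda>t. run \<beta> X (s0, b0) (take t rs)) [1..<Suc (length rs)])"
      by (simp only: map_map o_def F_def)
    then have "det_cost cost s0 (F X) rs = path_cost cost (fst (s0, b0)) rs (map fst (trace \<beta> X (s0, b0) rs))"
      by (simp only: det_cost_def trace_run fst_conv)
    then show ?thesis by (simp only: path_trace)
  qed
  have mF: "F \<in> measurable S \<Sigma>"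
    unfolding \<Sigma>_def by (rule measurable_measure_of) (auto simp: Nset_def)
  have sp: "space \<Sigma> = UNIV" by (simp add: \<Sigma>_def space_measure_of_conv)
  have ss: "sets \<Sigma> = sigma_sets UNIV Nset" unfolding \<Sigma>_def by (rule sets_measure_of) simp
  have mg: "(\<lambda>A. det_cost cost s0 A rs) \<in> borel_measurable \<Sigma>" for rs
  proof (rule measurableI)
    fix B :: "real set" assume B: "B \<in> sets borel"
    have "F -` ((\<lambda>A. det_cost cost s0 A rs) -` B) \<inter> space S = (\<lambda>X. Gd cost \<beta> (s0, b0) rs X) -` B \<inter> space S"
      by (auto simp: dc)
    also have "\<dots> \<in> sets S" unfolding S_def by (rule measurable_sets[OF meas_Gd B])
    finally have "(\<lambda>A. det_cost cost s0 A rs) -` B \<in> Nset" by (simp add: Nset_def)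
    then show "(\<lambda>A. det_cost cost s0 A rs) -` B \<inter> space \<Sigma> \<in> sets \<Sigma>" by (simp add: sp ss)
  qed simp
  have intS: "integrable S (\<lambda>X. Gd cost \<beta> (s0, b0) rs X)" for rs
    unfolding S_def
    by (intro integrableI_nonneg meas_Gd) (auto simp: nn_Gd Gd_nonneg nn)
  have "prob_space M" unfolding M_def S_def using mF S_def by (intro S.prob_space_distr) auto
  moreover have "integrable M (\<lambda>A. det_cost cost s0 A rs)" for rs
    unfolding M_def using intS[of rs] by (subst integrable_distr_eq[OF mF mg]) (simp add: dc)
  moreover have "random_det_exp_cost cost s0 M rs = BE cost \<beta> (s0, b0) rs" for rs
  proof -
    have "random_det_exp_cost cost s0 M rs = integral\<^sup>L S (\<lambda>X. Gd cost \<beta> (s0, b0) rs X)"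
      unfolding random_det_exp_cost_def M_def by (subst integral_distr[OF mF mg]) (simp add: dc)
    also have "\<dots> = enn2real (\<integral>\<^sup>+X. ennreal (Gd cost \<beta> (s0, b0) rs X) \<partial>S)"
      unfolding S_def by (intro integral_eq_nn_integral meas_Gd) (auto simp: Gd_nonneg nn)
    also have "\<dots> = BE cost \<beta> (s0, b0) rs" by (simp add: S_def nn_Gd BE_nonneg nn)
    finally show ?thesis .
  qed
  ultimately show ?thesis by (auto simp: random_det_alg_def)
qed

end

theorem mainTheorem3:
  fixes d :: "'x \<Rightarrow> 'x \<Rightarrow> real"
    and cost :: "'x \<Rightarrow> 'r \<Rightarrow> 'x \<Rightarrow> real"
    and s0 :: 'x
    and C :: real
    and step :: "('x pmf \<times> 'm) \<Rightarrow> 'r \<Rightarrow> ('x pmf \<times> 'm) pmf"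
    and m0 :: 'm
  assumes "online_problem d cost"
    and "C \<ge> 0"
    and "mixed_alg step"
    and "competitive C cost s0 (mixed_exp_cost cost s0 m0 step)"
  shows "(\<exists>M. random_det_alg cost s0 M \<and> competitive C cost s0 (random_det_exp_cost cost s0 M))
       \<and> (\<exists>(\<beta> :: 'x \<Rightarrow> ('x pmf \<times> 'm) pmf \<Rightarrow> 'r \<Rightarrow> ('x \<times> ('x pmf \<times> 'm) pmf) pmf) b0.
            behavioral_alg \<beta> \<and> competitive C cost s0 (behav_exp_cost cost s0 b0 \<beta>))
       \<and> (\<exists>(\<delta> :: 'x pmf \<Rightarrow> ('x pmf \<times> 'm) pmf \<Rightarrow> 'r \<Rightarrow> ('x pmf \<times> ('x pmf \<times> 'm) pmf)) b0.
            distributional_alg \<delta> \<and> competitive C cost s0 (distr_cost cost s0 b0 \<delta>))"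
proof -
  have nn: "\<And>u r v. 0 \<le> cost u r v" using assms(1) by (simp add: online_problem_def)
  note ma = assms(3)
  obtain K where K: "\<And>rs. mixed_exp_cost cost s0 m0 step rs \<le> C * opt_cost cost s0 rs + K"
    using assms(4) by (auto simp: competitive_def)
  define k0 where "k0 = (return_pmf s0, m0)"
  have g0: "fin_dist (fst k0)" by (simp add: k0_def fin_dist_def)
  have ME0: "mixed_exp_cost cost s0 m0 step rs = ME cost step k0 rs" for rs
    by (simp add: mixed_exp_cost_def ME_def k0_def)
  define \<beta> where "\<beta> = bstep cost step"
  define b0 where "b0 = return_pmf k0"
  have BA: "behavioral_alg \<beta>" unfolding \<beta>_def by (rule bstep_alg[OF nn ma])
  have Bb: "BE cost \<beta> (s0, b0) rs \<le> ME cost step k0 rs" for rs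
  proof -
    have "BE cost \<beta> (s0, b0) rs = E (fst k0) (\<lambda>x. BE cost (bstep cost step) (x, return_pmf k0) rs)"
      by (simp add: k0_def b0_def \<beta>_def)
    also have "\<dots> \<le> ME cost step k0 rs" by (rule behav_bound[OF nn ma g0])
    finally show ?thesis .
  qed
  have behav: "behav_exp_cost cost s0 b0 \<beta> rs = BE cost \<beta> (s0, b0) rs" for rs
    by (simp add: behav_exp_cost_def BE_def)
  obtain M where M: "random_det_alg cost s0 M" "\<And>rs. random_det_exp_cost cost s0 M rs = BE cost \<beta> (s0, b0) rs"
    using det_exists[of cost \<beta> s0 b0, OF nn BA] by blast
  have Db: "distr_cost cost s0 b0 (dstep step) rs \<le> ME cost step k0 rs" for rs
  proof -
    have "distr_cost cost s0 b0 (dstep step) rs = distr_cost_from cost (dstep step) (bind_pmf b0 fst, b0) rs"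
      by (simp add: distr_cost_def b0_def k0_def bind_return_pmf)
    also have "\<dots> \<le> E b0 (\<lambda>k. ME cost step k rs)"
      by (rule distr_bound[OF ma nn]) (use g0 in \<open>auto simp: b0_def\<close>)
    also have "\<dots> = ME cost step k0 rs" by (simp add: b0_def)
    finally show ?thesis .
  qed
  show ?thesis
  proof (intro conjI exI)
    show "random_det_alg cost s0 M" by (rule M(1))
    show "competitive C cost s0 (random_det_exp_cost cost s0 M)"
      unfolding competitive_def using K Bb M(2) ME0 by (metis order_trans)
    show "behavioral_alg \<beta>" by (rule BA)
    show "competitive C cost s0 (behav_exp_cost cost s0 b0 \<beta>)"
      unfolding competitive_def using K Bb behav ME0 by (metis order_trans)
    show "distributional_alg (dstep step)" by (rule dstep_alg[OF ma])
    show "competitive C cost s0 (distr_cost cost s0 b0 (dstep step))"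
      unfolding competitive_def using K Db ME0 by (metis order_trans)
  qed
qed

end
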